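(* Consider the sensor-network Kalman filtering model of the context, with the network state process $\{\Xi(k)\}$ a time-homogeneous Markov chain with transition probabilities $p_{ij}$. Let $V_k=\operatorname{tr}P(k\mid k-1)$ and $Z(k)=(P(k\mid k-1),\Xi(k-1))$. Then $V_k\in\mathbb{R}_{\ge0}$ for all $k\in\mathbb{N}_0$, and there exists $W\in\mathbb{R}_{\ge0}$ such that for all $k\in\mathbb{N}_0$, $$\mathbf{E}\{V_{k+1}\mid Z(k)=(P,i)\}\le W+\nu_i\big(\|A(k)\|^2\operatorname{tr}P+\operatorname{tr}Q(k)\big),$$ where $\nu_i=\sum_{j\in\mathbb{B}}p_{ij}\Pr\{r(k)=0\mid\Xi(k)=j\}$.
   Context: System: $x(k+1)=A(k)x(k)+w(k)$, $k\in\mathbb{N}_0$, $x(k)\in\mathbb{R}^n$, $x(0)\sim\mathcal N(x_0,P_0)$, $w(k)\sim\mathcal N(0,Q(k))$ independent. Sensors $S_1,\dots,S_M$: $y_m(k)=C_mx(k)+v_m(k)$, $v_m(k)\sim\mathcal N(0,R_m(k))$ independent; $x(0),w,v_m$ mutually independent; $\{A(k)\},\{Q(k)\},\{R_m(k)\}$ deterministic and bounded. $\|\cdot\|$ is the spectral norm. Network: directed tree with root (gateway) $S_0$; each $S_m$ has one outgoing edge $\mathcal E_m=(S_m,\mathrm{parent}(S_m))$ and a unique path to $S_0$ with edge set $\mathrm{edge}(\mathrm{path}(S_m))$. Network state $\Xi(k)\in\mathbb{B}=\{1,\dots,|\mathbb{B}|\}$, defined for $k\ge-1$; channel gains $h_m(k)\ge0$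 with time-homogeneous conditional distributions given the network state and conditionally independent across links and times given the network states. Link successes $\gamma_m(k)\in\{0,1\}$ with $\Pr\{\gamma_m(k)=1\mid h_m(k)=h,u_m(k)=u,b_m(k)=b\}=f_m(hu,b)$, where (standing assumption) the power and bit-rate laws are $u_m(k)=\kappa_m(\Xi(k),h_1(k),\dots,h_M(k))$, $b_m(k)=\eta_m(\Xi(k),h_1(k),\dots,h_M(k))$. Conditioned on the network states, the $\gamma_m(k)$ are independent across $m$ and $k$ with $\Pr\{\gamma_m(k)=1\mid\Xi(k)=j\}$ independent of $k$; network and dropout processes are independent of $x(0),w,v_m$. Estimator: $\theta_m(k)=\prod_{\mathcal E_i\in\mathrm{edge}(\mathrm{path}(S_m))}\gamma_i(k)$, $C(k)=[\theta_1(k)C_1;\dots;\theta_M(k)C_M]$, $y(k)=[\theta_1(k)y_1(k);\dots;\theta_M(k)y_M(k)]$, $R(k)=\mathrm{diag}(R_1(k),\dots,R_M(k))$; Kalman filter $\hat x(k+1|k)=A(k)\hat x(k|k-1)+K(k)(y(k)-C(k)\hat x(k|k-1))$, $P(k+1|k)=A(k)P(k|k-1)A(k)^T+Q(k)-K(k)C(k)P(k|k-1)A(k)^T$, $K(k)=A(k)P(k|k-1)C(k)^T(C(k)P(k|k-1)C(k)^T+R(k))^{-1}$, $P(0|-1)=P_0$, $\hat x(0|-1)=x_0$. $r(k)=1$ if $C(k)$ has full column rank, $0$ otherwise. *)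

theory Defs
  imports "HOL-Analysis.Analysis"
begin

definition specnorm :: "real^'n^'m \<Rightarrow> real" where
  "specnorm A = onorm (\<lambda>x. A *v x)"

definition psd :: "real^'n^'n \<Rightarrow> bool" where
  "psd P \<longleftrightarrow> transpose P = P \<and> (\<forall>x. 0 \<le> x \<bullet> (P *v x))"

definition pd :: "real^'n^'n \<Rightarrow> bool" where
  "pd P \<longleftrightarrow> transpose P = P \<and> (\<forall>x. x \<noteq> 0 \<longrightarrow> 0 < x \<bullet> (P *v x))"

text \<open>Tree network: parent m = None means the outgoing edge of S_m goes to the gateway S_0.
  The edge set of the path from S_m to S_0 is identified with the set of sensors i whose
  outgoing edge E_i lies on that path, i.e. m and all its ancestors.\<close>
definition parent_rel :: "('m \<Rightarrow> 'm option) \<Rightarrow> ('m \<times> 'm) set" where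
  "parent_rel parent = {(a, b). parent a = Some b}"

definition path_edges :: "('m \<Rightarrow> 'm option) \<Rightarrow> 'm \<Rightarrow> 'm set" where
  "path_edges parent m = {i. (m, i) \<in> (parent_rel parent)\<^sup>*}"

text \<open>theta_m for a realisation g of the link successes (g i = True iff gamma_i(k) = 1).\<close>
definition theta :: "('m \<Rightarrow> 'm option) \<Rightarrow> ('m \<Rightarrow> bool) \<Rightarrow> 'm \<Rightarrow> real" where
  "theta parent g m = (\<Prod>i\<in>path_edges parent m. if g i then 1 else 0)"

text \<open>Stacked measurement matrix C(k): output coordinate a belongs to sensor (sensor a),
  Cfull stacks C_1,...,C_M.\<close>
definition Cmat :: "('p \<Rightarrow> 'm) \<Rightarrow> real^'n^'p \<Rightarrow> ('m \<Rightarrow> 'm option) \<Rightarrow> ('m \<Rightarrow> bool) \<Rightarrow> real^'n^'p" where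
  "Cmat sensor Cfull parent g = (\<chi> a. theta parent g (sensor a) *\<^sub>R (Cfull $ a))"

definition riccati :: "real^'n^'n \<Rightarrow> real^'n^'n \<Rightarrow> real^'n^'p \<Rightarrow> real^'p^'p \<Rightarrow> real^'n^'n \<Rightarrow> real^'n^'n" where
  "riccati A Q C R P =
     (let K = A ** P ** transpose C ** matrix_inv (C ** P ** transpose C + R)
      in A ** P ** transpose A + Q - K ** C ** P ** transpose A)"

text \<open>Conditional probability of the link-success pattern g given network state j:
  links conditionally independent, q m j = Pr{gamma_m(k)=1 | Xi(k)=j}.\<close>
definition pattern_prob :: "('m::finite \<Rightarrow> 'b \<Rightarrow> real) \<Rightarrow> 'b \<Rightarrow> ('m \<Rightarrow> bool) \<Rightarrow> real" where
  "pattern_prob q j g = (\<Prod>m\<in>UNIV. if g m then q m j else 1 - q m j)"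

text \<open>r(k) = 1 iff C(k) has full column rank.\<close>
definition full_col_rank :: "real^'n^'p \<Rightarrow> bool" where
  "full_col_rank C \<longleftrightarrow> rank C = CARD('n)"

definition prob_r0 :: "('p \<Rightarrow> 'm::finite) \<Rightarrow> real^'n^'p \<Rightarrow> ('m \<Rightarrow> 'm option) \<Rightarrow> ('m \<Rightarrow> 'b \<Rightarrow> real) \<Rightarrow> 'b \<Rightarrow> real" where
  "prob_r0 sensor Cfull parent q j =
     (\<Sum>g\<in>{g. \<not> full_col_rank (Cmat sensor Cfull parent g)}. pattern_prob q j g)"

text \<open>E{V_{k+1} | Z(k) = (P,i)} = sum_j p_ij sum_g Pr{gamma(k)=g | Xi(k)=j} tr P(k+1|k).\<close>
definition cond_exp_V :: "(nat \<Rightarrow> real^'n^'n) \<Rightarrow> (nat \<Rightarrow> real^'n^'n) \<Rightarrow> (nat \<Rightarrow> real^'p^'p)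
    \<Rightarrow> ('p \<Rightarrow> 'm::finite) \<Rightarrow> real^'n^'p \<Rightarrow> ('m \<Rightarrow> 'm option) \<Rightarrow> ('b::finite \<Rightarrow> 'b \<Rightarrow> real)
    \<Rightarrow> ('m \<Rightarrow> 'b \<Rightarrow> real) \<Rightarrow> nat \<Rightarrow> real^'n^'n \<Rightarrow> 'b \<Rightarrow> real" where
  "cond_exp_V A Q R sensor Cfull parent p q k P i =
     (\<Sum>j\<in>UNIV. p i j * (\<Sum>g\<in>UNIV. pattern_prob q j g *
        trace (riccati (A k) (Q k) (Cmat sensor Cfull parent g) (R k) P)))"

text \<open>Pathwise prediction covariance P(k|k-1) for a realisation G of the link successes.\<close>
fun Ptraj :: "(nat \<Rightarrow> real^'n^'n) \<Rightarrow> (nat \<Rightarrow> real^'n^'n) \<Rightarrow> (nat \<Rightarrow> real^'p^'p)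
    \<Rightarrow> ('p \<Rightarrow> 'm) \<Rightarrow> real^'n^'p \<Rightarrow> ('m \<Rightarrow> 'm option) \<Rightarrow> real^'n^'n
    \<Rightarrow> (nat \<Rightarrow> 'm \<Rightarrow> bool) \<Rightarrow> nat \<Rightarrow> real^'n^'n" where
  "Ptraj A Q R sensor Cfull parent P0 G 0 = P0"
| "Ptraj A Q R sensor Cfull parent P0 G (Suc k) =
     riccati (A k) (Q k) (Cmat sensor Cfull parent (G k)) (R k) (Ptraj A Q R sensor Cfull parent P0 G k)"

end

theory Submission
  imports Defs
begin

lemma transpose_add: "transpose (A + B) = transpose A + transpose (B::'a::semiring_1^'n^'m)"
  by (simp add: transpose_def vec_eq_iff)
lemma transpose_diff: "transpose (A - B) = transpose A - transpose (B::'a::ring_1^'n^'m)"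
  by (simp add: transpose_def vec_eq_iff)
lemma matrix_sub_ldistrib: "(A::real^'n^'m) ** (B - C) = A ** B - A ** C"
  by (simp add: matrix_eq matrix_vector_mul_assoc[symmetric] matrix_vector_mult_diff_rdistrib
      matrix_vector_mult_diff_distrib)
lemma matrix_sub_rdistrib: "((B::real^'n^'m) - C) ** A = B ** A - C ** A"
  by (simp add: matrix_eq matrix_vector_mul_assoc[symmetric] matrix_vector_mult_diff_rdistrib)
lemma matrix_add_rdistrib': "((B::real^'n^'m) + C) ** A = B ** A + C ** A"
  by (simp add: matrix_eq matrix_vector_mul_assoc[symmetric] matrix_vector_mult_add_rdistrib)

lemma dot_transpose: "x \<bullet> ((A::real^'n^'m) *v y) = (transpose A *v x) \<bullet> y"
  by (simp add: transpose_matrix_vector dot_lmul_matrix)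

lemma dot_sym: "transpose (P::real^'n^'n) = P \<Longrightarrow> x \<bullet> (P *v y) = (P *v x) \<bullet> y"
  by (metis dot_transpose)

lemma pd_S:
  fixes P :: "real^'n^'n" and C :: "real^'n^'p" and R :: "real^'p^'p"
  assumes "psd P" "pd R"
  shows "pd (C ** P ** transpose C + R)"
proof -
  have tP: "transpose P = P" and tR: "transpose R = R" using assms by (auto simp: psd_def pd_def)
  have "transpose (C ** P ** transpose C + R) = C ** P ** transpose C + R"
    by (simp add: transpose_add matrix_transpose_mul tP tR matrix_mul_assoc)
  moreover have "0 < x \<bullet> ((C ** P ** transpose C + R) *v x)" if "x \<noteq> 0" for x
  proof -
    have "x \<bullet> ((C ** P ** transpose C + R) *v x) = (transpose C *v x) \<bullet> (P *v (transpose C *v x)) + x \<bullet> (R *v x)"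
      by (simp add: matrix_vector_mult_add_rdistrib inner_add_right matrix_vector_mul_assoc[symmetric] dot_transpose)
    moreover have "0 \<le> (transpose C *v x) \<bullet> (P *v (transpose C *v x))" using assms(1) by (simp add: psd_def)
    moreover have "0 < x \<bullet> (R *v x)" using assms(2) that by (simp add: pd_def)
    ultimately show ?thesis by linarith
  qed
  ultimately show ?thesis by (simp add: pd_def)
qed

lemma pd_inv:
  fixes S :: "real^'p^'p"
  assumes "pd S"
  shows "S ** matrix_inv S = mat 1" "matrix_inv S ** S = mat 1" "transpose (matrix_inv S) = matrix_inv S"
proof -
  have "inj ((*v) S)"
    unfolding vec.inj_iff_eq_0
  proof (intro allI impI)
    fix x assume "S *v x = 0"
    then have "x \<bullet> (S *v x) = 0" by simp
    then show "x = 0" using assms unfolding pd_def by force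
  qed
  then have "invertible S" using matrix_left_invertible_injective invertible_left_inverse by blast
  then have ex: "\<exists>A'. S ** A' = mat 1 \<and> A' ** S = mat 1" by (simp add: invertible_def)
  show 1: "S ** matrix_inv S = mat 1" and 2: "matrix_inv S ** S = mat 1"
    using someI_ex[OF ex] by (auto simp: matrix_inv_def)
  have tS: "transpose S = S" using assms by (simp add: pd_def)
  have "transpose (matrix_inv S) ** S = mat 1"
    using 1 by (metis matrix_transpose_mul tS transpose_mat)
  then have "transpose (matrix_inv S) = transpose (matrix_inv S) ** (S ** matrix_inv S)"
    using 1 by simp
  also have "\<dots> = matrix_inv S" using \<open>transpose (matrix_inv S) ** S = mat 1\<close>
    by (simp add: matrix_mul_assoc)
  finally show "transpose (matrix_inv S) = matrix_inv S" .
qed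

lemma riccati_eq:
  "riccati A Q C R P = A ** (P - P ** transpose C ** matrix_inv (C ** P ** transpose C + R) ** C ** P) ** transpose A + Q"
  unfolding riccati_def Let_def
  by (simp add: matrix_sub_ldistrib matrix_sub_rdistrib matrix_mul_assoc)

lemma key:
  fixes P :: "real^'n^'n" and C :: "real^'n^'p" and R :: "real^'p^'p"
  assumes "psd P" "pd R"
  defines "M \<equiv> P - P ** transpose C ** matrix_inv (C ** P ** transpose C + R) ** C ** P"
  shows "0 \<le> x \<bullet> (M *v x)"
    and "x \<bullet> (M *v x) \<le> (x - transpose C *v w) \<bullet> (P *v (x - transpose C *v w)) + w \<bullet> (R *v w)"
proof -
  define S where "S = C ** P ** transpose C + R"
  define Si where "Si = matrix_inv S"
  have pS: "pd S" unfolding S_def using pd_S assms by blast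
  note inv = pd_inv[OF pS]
  have tP: "transpose P = P" using assms by (simp add: psd_def)
  have tS: "transpose S = S" using pS by (simp add: pd_def)
  define y where "y = Si *v (C *v (P *v x))"
  have Sy: "S *v y = C *v (P *v x)"
    unfolding y_def Si_def by (metis inv(1) matrix_vector_mul_assoc matrix_vector_mul_lid)
  have E1: "x \<bullet> (M *v x) = x \<bullet> (P *v x) - (S *v y) \<bullet> y"
  proof -
    have "M *v x = P *v x - P *v (transpose C *v y)"
      unfolding M_def y_def Si_def S_def
      by (simp add: matrix_vector_mult_diff_rdistrib matrix_vector_mul_assoc matrix_mul_assoc)
    moreover have "x \<bullet> (P *v (transpose C *v y)) = (S *v y) \<bullet> y"
      by (metis Sy dot_sym tP dot_transpose transpose_transpose)
    ultimately show ?thesis by (simp add: inner_diff_right)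
  qed
  have E2: "(x - transpose C *v w) \<bullet> (P *v (x - transpose C *v w)) + w \<bullet> (R *v w)
      = x \<bullet> (P *v x) - 2 * ((S *v y) \<bullet> w) + w \<bullet> (S *v w)" for w
  proof -
    have a: "x \<bullet> (P *v (transpose C *v w)) = (S *v y) \<bullet> w"
      by (metis Sy dot_sym tP dot_transpose transpose_transpose)
    have b: "(transpose C *v w) \<bullet> (P *v x) = (S *v y) \<bullet> w"
      by (metis a dot_sym tP inner_commute)
    have c: "w \<bullet> (S *v w) = (transpose C *v w) \<bullet> (P *v (transpose C *v w)) + w \<bullet> (R *v w)"
      unfolding S_def
      by (simp add: matrix_vector_mult_add_rdistrib inner_add_right matrix_vector_mul_assoc[symmetric] dot_transpose)
    show ?thesis
      by (simp add: matrix_vector_mult_diff_distrib inner_diff_left inner_diff_right a b c del: transpose_matrix_vector)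
  qed
  have E3: "(x - transpose C *v w) \<bullet> (P *v (x - transpose C *v w)) + w \<bullet> (R *v w)
      = x \<bullet> (M *v x) + (w - y) \<bullet> (S *v (w - y))" for w
  proof -
    have "(w - y) \<bullet> (S *v (w - y)) = w \<bullet> (S *v w) - 2 * ((S *v y) \<bullet> w) + (S *v y) \<bullet> y"
      using dot_sym[OF tS, of y w] dot_sym[OF tS, of y y]
      by (simp add: matrix_vector_mult_diff_distrib inner_diff_left inner_diff_right inner_commute)
    then show ?thesis using E1 E2[of w] by simp
  qed
  have Spos: "0 \<le> z \<bullet> (S *v z)" for z
    using pS unfolding pd_def by (cases "z = 0") (auto intro: less_imp_le)
  show "x \<bullet> (M *v x) \<le> (x - transpose C *v w) \<bullet> (P *v (x - transpose C *v w)) + w \<bullet> (R *v w)"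
    using E3[of w] Spos[of "w - y"] by linarith
  have "0 \<le> (x - transpose C *v y) \<bullet> (P *v (x - transpose C *v y))" using assms(1) by (simp add: psd_def)
  moreover have "0 \<le> y \<bullet> (R *v y)" using assms(2) unfolding pd_def by (cases "y = 0") (auto intro: less_imp_le)
  ultimately show "0 \<le> x \<bullet> (M *v x)" using E3[of y] by simp
qed

lemma qf_sum: "x \<bullet> ((P::real^'n^'m) *v y) = (\<Sum>a\<in>UNIV. \<Sum>b\<in>UNIV. x$a * P$a$b * y$b)"
  by (simp add: inner_vec_def matrix_vector_mult_def sum_distrib_left mult.assoc)

lemma ax_qf: "axis i t \<bullet> ((P::real^'n^'n) *v axis j s) = t * s * P$i$j"
proof -
  have "axis i t \<bullet> (P *v axis j s) = (\<Sum>a\<in>UNIV. \<Sum>b\<in>UNIV. (if a = i then (if b = j then t * P$a$b * s else 0) else 0))"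
    unfolding qf_sum by (intro sum.cong refl) (simp add: axis_def)
  also have "\<dots> = (\<Sum>a\<in>UNIV. (if a = i then (\<Sum>b\<in>UNIV. if b = j then t * P$a$b * s else 0) else 0))"
    by (intro sum.cong refl) simp
  also have "\<dots> = t * s * P$i$j" by simp
  finally show ?thesis .
qed

lemma psd_sym_entry: "psd P \<Longrightarrow> P$a$b = P$b$a"
  unfolding psd_def by (metis transpose_def vec_lambda_beta)

lemma psd_diag: "psd P \<Longrightarrow> 0 \<le> P$i$i"
  using ax_qf[of i 1 P i 1] unfolding psd_def by (metis mult_1)

lemma psd_zero_diag:
  assumes "psd P" "P$i$i = 0"
  shows "P$i$j = 0"
proof (rule ccontr)
  assume ne: "P$i$j \<noteq> 0"
  then have ij: "i \<noteq> j" using assms by auto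
  have sym: "P$j$i = P$i$j" using psd_sym_entry[OF assms(1)] by simp
  define t where "t = - (P$j$j + 1) / (2 * P$i$j)"
  define v where "v = axis i t + axis j 1"
  have "v \<bullet> (P *v v) = t*t*P$i$i + t*P$i$j + t*P$j$i + P$j$j"
    unfolding v_def by (simp add: matrix_vector_right_distrib inner_add_left inner_add_right ax_qf)
  also have "\<dots> = 2*t*P$i$j + P$j$j" using assms(2) sym by simp
  also have "\<dots> = -1" unfolding t_def using ne by (simp add: field_simps)
  finally have "v \<bullet> (P *v v) = -1" .
  moreover have "0 \<le> v \<bullet> (P *v v)" using assms(1) by (simp add: psd_def)
  ultimately show False by simp
qed

lemma gram_aux:
  "\<And>P::real^'n^'n. card {i. P$i$i \<noteq> 0} = n \<Longrightarrow> psd P \<Longrightarrow>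
     \<exists>U (N::nat). \<forall>x. x \<bullet> (P *v x) = (\<Sum>k<N. (U k \<bullet> x)^2)"
proof (induction n rule: less_induct)
  case (less n P)
  show ?case
  proof (cases "{i. P$i$i \<noteq> 0} = {}")
    case True
    then have "P$a$b = 0" for a b using psd_zero_diag[OF less.prems(2)] by auto
    then have "x \<bullet> (P *v x) = 0" for x by (simp add: qf_sum)
    then show ?thesis by (intro exI[of _ "\<lambda>k. 0"] exI[of _ 0]) simp
  next
    case False
    then obtain i where iD: "P$i$i \<noteq> 0" by auto
    define d where "d = P$i$i"
    have dpos: "0 < d" using psd_diag[OF less.prems(2), of i] iD unfolding d_def by simp
    have sym: "P$a$b = P$b$a" for a b using psd_sym_entry[OF less.prems(2)] .
    define P' :: "real^'n^'n" where "P' = (\<chi> a b. P$a$b - P$a$i * P$i$b / d)"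
    define u :: "real^'n" where "u = (1 / sqrt d) *\<^sub>R (\<chi> b. P$i$b)"
    have ux: "(u \<bullet> x)^2 = ((P *v x)$i)^2 / d" for x
    proof -
      have "u \<bullet> x = (1 / sqrt d) * (P *v x)$i"
        unfolding u_def by (simp add: inner_vec_def matrix_vector_mult_def sum_distrib_left mult.assoc)
      then show ?thesis using dpos by (simp add: power_mult_distrib power_divide)
    qed
    have Pxi: "(P *v x)$i = (\<Sum>b\<in>UNIV. P$i$b * x$b)" for x
      by (simp add: matrix_vector_mult_def)
    have Pxi': "(P *v x)$i = (\<Sum>a\<in>UNIV. x$a * P$a$i)" for x
      unfolding Pxi by (intro sum.cong refl) (simp add: sym[of i])
    have P'x: "x \<bullet> (P' *v x) = x \<bullet> (P *v x) - ((P *v x)$i)^2 / d" for x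
    proof -
      have "x \<bullet> (P' *v x) = (\<Sum>a\<in>UNIV. \<Sum>b\<in>UNIV. x$a * P$a$b * x$b - (x$a * P$a$i) * (P$i$b * x$b) / d)"
        unfolding qf_sum P'_def by (intro sum.cong refl) (simp add: algebra_simps)
      also have "\<dots> = (\<Sum>a\<in>UNIV. \<Sum>b\<in>UNIV. x$a * P$a$b * x$b)
          - (\<Sum>a\<in>UNIV. \<Sum>b\<in>UNIV. (x$a * P$a$i) * (P$i$b * x$b)) / d"
        by (simp add: sum_subtractf sum_divide_distrib)
      also have "(\<Sum>a\<in>UNIV. \<Sum>b\<in>UNIV. (x$a * P$a$i) * (P$i$b * x$b))
          = (\<Sum>a\<in>UNIV. x$a * P$a$i) * (\<Sum>b\<in>UNIV. P$i$b * x$b)"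
        by (simp add: sum_product)
      also have "\<dots> = ((P *v x)$i)^2" by (simp add: power2_eq_square Pxi'[symmetric] Pxi[symmetric])
      finally show ?thesis by (simp add: qf_sum)
    qed
    have psdP': "psd P'"
      unfolding psd_def
    proof
      show "transpose P' = P'"
      proof -
        have "P'$b$a = P'$a$b" for a b
          unfolding P'_def using sym[of a b] sym[of a i] sym[of b i] by simp
        then show ?thesis unfolding transpose_def by (simp add: vec_eq_iff)
      qed
    next
      show "\<forall>x. 0 \<le> x \<bullet> (P' *v x)"
      proof
        fix x
        define s where "s = (P *v x)$i"
        define t where "t = - s / d"
        define v where "v = x + axis i t"
        have tP: "transpose P = P" using less.prems(2) by (simp add: psd_def)
        have ix: "axis i t \<bullet> (P *v x) = t * s"
          by (simp add: inner_axis' s_def)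
        have xi: "x \<bullet> (P *v axis i t) = t * s"
          using dot_sym[OF tP, of x "axis i t"] by (simp add: inner_axis s_def)
        have "v \<bullet> (P *v v) = x \<bullet> (P *v x) + 2 * t * s + t * t * d"
          unfolding v_def by (simp add: matrix_vector_right_distrib inner_add_left inner_add_right ax_qf xi ix d_def)
        also have "\<dots> = x \<bullet> (P *v x) - s^2 / d"
          unfolding t_def using dpos by (simp add: field_simps power2_eq_square)
        finally have "x \<bullet> (P' *v x) = v \<bullet> (P *v v)" using P'x s_def by simp
        then show "0 \<le> x \<bullet> (P' *v x)" using less.prems(2) by (simp add: psd_def)
      qed
    qed
    have sub: "{j. P'$j$j \<noteq> 0} \<subset> {j. P$j$j \<noteq> 0}"
    proof
      show "{j. P'$j$j \<noteq> 0} \<subseteq> {j. P$j$j \<noteq> 0}"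
      proof
        fix j assume "j \<in> {j. P'$j$j \<noteq> 0}"
        moreover have "P$j$j = 0 \<Longrightarrow> P'$j$j = 0"
          using psd_zero_diag[OF less.prems(2), of j i] unfolding P'_def by (simp add: sym[of i j])
        ultimately show "j \<in> {j. P$j$j \<noteq> 0}" by auto
      qed
      have "P'$i$i = 0" unfolding P'_def using dpos by (simp add: d_def)
      then show "{j. P'$j$j \<noteq> 0} \<noteq> {j. P$j$j \<noteq> 0}" using iD by auto
    qed
    then have "card {j. P'$j$j \<noteq> 0} < n" using less.prems(1) psubset_card_mono[OF finite, of _ "{j. P$j$j \<noteq> 0}"] by blast
    from less.IH[OF this refl psdP'] obtain U and N :: nat where UN: "\<forall>x. x \<bullet> (P' *v x) = (\<Sum>k<N. (U k \<bullet> x)^2)" by blast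
    have "x \<bullet> (P *v x) = (\<Sum>k<Suc N. ((U(N := u)) k \<bullet> x)^2)" for x
    proof -
      have "(\<Sum>k<N. ((U(N := u)) k \<bullet> x)^2) = (\<Sum>k<N. (U k \<bullet> x)^2)"
        by (intro sum.cong) auto
      then show ?thesis using UN P'x[of x] ux[of x] by simp
    qed
    then show ?thesis by blast
  qed
qed

lemma gram: "psd (P::real^'n^'n) \<Longrightarrow> \<exists>U (N::nat). \<forall>x. x \<bullet> (P *v x) = (\<Sum>k<N. (U k \<bullet> x)^2)"
  using gram_aux by blast

lemma specnorm_bound: "norm ((A::real^'n^'m) *v x) \<le> specnorm A * norm x"
  unfolding specnorm_def by (rule onorm[OF matrix_vector_mul_bounded_linear])

lemma specnorm_nonneg: "0 \<le> specnorm (A::real^'n^'m)"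
  unfolding specnorm_def by (rule onorm_pos_le[OF matrix_vector_mul_bounded_linear])

lemma norm_sq_vec: "(norm (v::real^'n))^2 = (\<Sum>i\<in>UNIV. (v$i)^2)"
proof -
  have "(norm v)^2 = v \<bullet> v" by (simp add: power2_norm_eq_inner)
  also have "\<dots> = (\<Sum>i\<in>UNIV. v$i * v$i)" unfolding inner_vec_def by simp
  finally show ?thesis by (simp add: power2_eq_square)
qed

lemma diag_conj: "((A::real^'n^'m) ** M ** transpose A)$i$i = (A$i) \<bullet> (M *v (A$i))"
  by (simp add: matrix_matrix_mult_def transpose_def qf_sum sum_distrib_right mult.assoc)
     (rule sum.swap)

lemma trace_conj: "trace ((A::real^'n^'m) ** M ** transpose A) = (\<Sum>i\<in>UNIV. (A$i) \<bullet> (M *v (A$i)))"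
  by (simp add: trace_def diag_conj)

lemma trace_psd_bound:
  fixes A :: "real^'n^'m" and P :: "real^'n^'n"
  assumes "psd P"
  shows "trace (A ** P ** transpose A) \<le> (specnorm A)^2 * trace P"
proof -
  obtain U and N :: nat where UN: "\<forall>x. x \<bullet> (P *v x) = (\<Sum>k<N. (U k \<bullet> x)^2)"
    using gram[OF assms] by blast
  have rowdot: "U k \<bullet> (A$i) = (A *v U k)$i" for k i
    by (simp add: inner_vec_def matrix_vector_mult_def mult.commute)
  have "trace (A ** P ** transpose A) = (\<Sum>i\<in>UNIV. \<Sum>k<N. ((A *v U k)$i)^2)"
    unfolding trace_conj using UN rowdot by simp
  also have "\<dots> = (\<Sum>k<N. (norm (A *v U k))^2)"
    by (subst sum.swap) (simp add: norm_sq_vec)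
  also have "\<dots> \<le> (\<Sum>k<N. (specnorm A)^2 * (norm (U k))^2)"
  proof (rule sum_mono)
    fix k
    have "norm (A *v U k) \<le> specnorm A * norm (U k)" by (rule specnorm_bound)
    then have "(norm (A *v U k))^2 \<le> (specnorm A * norm (U k))^2"
      by (rule power_mono) simp
    then show "(norm (A *v U k))^2 \<le> (specnorm A)^2 * (norm (U k))^2"
      by (simp add: power_mult_distrib)
  qed
  also have "\<dots> = (specnorm A)^2 * (\<Sum>k<N. (norm (U k))^2)"
    by (simp add: sum_distrib_left)
  also have "(\<Sum>k<N. (norm (U k))^2) = trace P"
  proof -
    have "P$i$i = (\<Sum>k<N. ((U k)$i)^2)" for i
      using UN[rule_format, of "axis i 1"] ax_qf[of i 1 P i 1] by (simp add: inner_axis)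
    then show ?thesis
      by (simp add: trace_def norm_sq_vec) (rule sum.swap)
  qed
  finally show ?thesis .
qed

lemma trace_psd_nonneg: "psd P \<Longrightarrow> 0 \<le> trace P"
  unfolding trace_def by (intro sum_nonneg psd_diag)

lemma ric_psd:
  fixes P :: "real^'n^'n" and C :: "real^'n^'p" and R :: "real^'p^'p" and A Q :: "real^'n^'n"
  assumes "psd P" "pd R" "psd Q"
  shows "psd (riccati A Q C R P)"
proof -
  define Si where "Si = matrix_inv (C ** P ** transpose C + R)"
  define M where "M = P - P ** transpose C ** Si ** C ** P"
  have tP: "transpose P = P" using assms by (simp add: psd_def)
  have tQ: "transpose Q = Q" using assms by (simp add: psd_def)
  have tSi: "transpose Si = Si" unfolding Si_def using pd_inv(3)[OF pd_S[OF assms(1,2)]] .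
  have tM: "transpose M = M"
    unfolding M_def by (simp add: transpose_diff matrix_transpose_mul tP tSi matrix_mul_assoc)
  have ric: "riccati A Q C R P = A ** M ** transpose A + Q"
    unfolding M_def Si_def by (rule riccati_eq)
  have "transpose (A ** M ** transpose A + Q) = A ** M ** transpose A + Q"
    by (simp add: transpose_add matrix_transpose_mul tM tQ matrix_mul_assoc)
  moreover have "0 \<le> x \<bullet> ((A ** M ** transpose A + Q) *v x)" for x
  proof -
    have "x \<bullet> ((A ** M ** transpose A + Q) *v x) = (transpose A *v x) \<bullet> (M *v (transpose A *v x)) + x \<bullet> (Q *v x)"
      by (simp add: matrix_vector_mult_add_rdistrib inner_add_right matrix_vector_mul_assoc[symmetric] dot_transpose
          del: transpose_matrix_vector)
    moreover have "0 \<le> (transpose A *v x) \<bullet> (M *v (transpose A *v x))"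
      unfolding M_def Si_def by (rule key(1)[OF assms(1,2)])
    moreover have "0 \<le> x \<bullet> (Q *v x)" using assms(3) by (simp add: psd_def)
    ultimately show ?thesis by linarith
  qed
  ultimately show ?thesis unfolding ric psd_def by blast
qed

lemma ric_trace_bound1:
  fixes P :: "real^'n^'n" and C :: "real^'n^'p" and R :: "real^'p^'p" and A Q :: "real^'n^'n"
  assumes "psd P" "pd R"
  shows "trace (riccati A Q C R P) \<le> (specnorm A)^2 * trace P + trace Q"
proof -
  define M where "M = P - P ** transpose C ** matrix_inv (C ** P ** transpose C + R) ** C ** P"
  have "trace (A ** M ** transpose A) \<le> trace (A ** P ** transpose A)"
    unfolding trace_conj
  proof (rule sum_mono)
    fix i
    show "A$i \<bullet> (M *v A$i) \<le> A$i \<bullet> (P *v A$i)"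
      using key(2)[OF assms, of "A$i" C 0] unfolding M_def by simp
  qed
  also have "\<dots> \<le> (specnorm A)^2 * trace P" by (rule trace_psd_bound[OF assms(1)])
  finally show ?thesis unfolding riccati_eq M_def[symmetric] trace_add by simp
qed

lemma quad_bound: "w \<bullet> ((R::real^'p^'p) *v w) \<le> specnorm R * (norm w)^2"
proof -
  have "w \<bullet> (R *v w) \<le> norm w * norm (R *v w)" by (rule norm_cauchy_schwarz)
  also have "\<dots> \<le> norm w * (specnorm R * norm w)"
    by (rule mult_left_mono[OF specnorm_bound]) simp
  finally show ?thesis by (simp add: power2_eq_square algebra_simps)
qed

lemma row_norm_bound: "(norm ((A::real^'n^'m)$i))^2 \<le> real CARD('n) * (specnorm A)^2"
proof -
  have "(norm (A$i))^2 = (\<Sum>j\<in>UNIV. (A$i$j)^2)" by (rule norm_sq_vec)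
  also have "\<dots> \<le> of_nat (card (UNIV::'n set)) * (specnorm A)^2"
  proof (rule sum_bounded_above)
    fix j
    have "\<bar>A$i$j\<bar> \<le> \<bar>specnorm A\<bar>"
      using matrix_component_le_onorm[of A i j] specnorm_nonneg[of A] unfolding specnorm_def by simp
    then show "(A$i$j)^2 \<le> (specnorm A)^2" by (simp add: abs_le_square_iff)
  qed
  finally show ?thesis by simp
qed

lemma trace_bound: "trace (Q::real^'n^'n) \<le> real CARD('n) * specnorm Q"
proof -
  have "trace Q \<le> of_nat (card (UNIV::'n set)) * specnorm Q"
    unfolding trace_def
  proof (rule sum_bounded_above)
    fix i show "Q$i$i \<le> specnorm Q"
      using matrix_component_le_onorm[of Q i i] unfolding specnorm_def by simp
  qed
  then show ?thesis by simp
qed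

lemma ric_trace_bound2:
  fixes P :: "real^'n^'n" and C :: "real^'n^'p" and R :: "real^'p^'p" and A Q :: "real^'n^'n"
    and L :: "real^'p^'n"
  assumes "psd P" "pd R" "L ** C = mat 1"
    and "specnorm A \<le> cA" "specnorm R \<le> cR" "specnorm Q \<le> cQ"
  shows "trace (riccati A Q C R P) \<le>
     real CARD('n) * (cR * ((specnorm (transpose L))^2 * (real CARD('n) * cA^2))) + real CARD('n) * cQ"
proof -
  define M where "M = P - P ** transpose C ** matrix_inv (C ** P ** transpose C + R) ** C ** P"
  define K where "K = cR * ((specnorm (transpose L))^2 * (real CARD('n) * cA^2))"
  have cR0: "0 \<le> cR" using assms(5) specnorm_nonneg[of R] by linarith
  have cA0: "0 \<le> cA" using assms(4) specnorm_nonneg[of A] by linarith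
  have "trace (A ** M ** transpose A) \<le> (\<Sum>i\<in>(UNIV::'n set). K)"
    unfolding trace_conj
  proof (rule sum_mono)
    fix i
    define w where "w = transpose L *v A$i"
    have cw: "A$i - transpose C *v w = 0"
      unfolding w_def by (simp add: matrix_vector_mul_assoc matrix_transpose_mul[symmetric] assms(3) transpose_mat
         del: transpose_matrix_vector)
    have "A$i \<bullet> (M *v A$i) \<le> w \<bullet> (R *v w)"
      using key(2)[OF assms(1,2), of "A$i" C w] unfolding M_def cw by simp
    also have "\<dots> \<le> specnorm R * (norm w)^2" by (rule quad_bound)
    also have "\<dots> \<le> cR * (norm w)^2" by (rule mult_right_mono[OF assms(5)]) simp
    also have "(norm w)^2 \<le> (specnorm (transpose L))^2 * (real CARD('n) * cA^2)"
    proof -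
      have "norm w \<le> specnorm (transpose L) * norm (A$i)" unfolding w_def by (rule specnorm_bound)
      then have "(norm w)^2 \<le> (specnorm (transpose L) * norm (A$i))^2" by (rule power_mono) simp
      also have "\<dots> = (specnorm (transpose L))^2 * (norm (A$i))^2" by (simp add: power_mult_distrib)
      also have "(norm (A$i))^2 \<le> real CARD('n) * cA^2"
      proof -
        have "(specnorm A)^2 \<le> cA^2" using assms(4) specnorm_nonneg[of A] by (simp add: power_mono)
        then show ?thesis using row_norm_bound[of A i] by (smt (verit) mult_left_mono of_nat_0_le_iff)
      qed
      then have "(specnorm (transpose L))^2 * (norm (A$i))^2 \<le> (specnorm (transpose L))^2 * (real CARD('n) * cA^2)"
        by (rule mult_left_mono) simp
      finally show ?thesis .
    qed
    then have "cR * (norm w)^2 \<le> K" unfolding K_def by (rule mult_left_mono[OF _ cR0])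
    finally show "A$i \<bullet> (M *v A$i) \<le> K" .
  qed
  also have "\<dots> = real CARD('n) * K" by simp
  finally have 1: "trace (A ** M ** transpose A) \<le> real CARD('n) * K" .
  have 2: "trace Q \<le> real CARD('n) * cQ"
    using trace_bound[of Q] assms(6) by (smt (verit) mult_left_mono of_nat_0_le_iff)
  show ?thesis using 1 2 unfolding riccati_eq M_def[symmetric] trace_add K_def by simp
qed

lemma pattern_prob_bounds:
  assumes "\<And>m j. 0 \<le> q m j \<and> q m j \<le> 1"
  shows "0 \<le> pattern_prob q j g" "pattern_prob q j g \<le> 1"
  unfolding pattern_prob_def using assms
  by (auto intro!: prod_nonneg prod_le_1)

theorem lemma2:
  fixes A :: "nat \<Rightarrow> real^'n^'n" and Q :: "nat \<Rightarrow> real^'n^'n"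
    and R :: "nat \<Rightarrow> real^'p^'p" and sensor :: "'p \<Rightarrow> 'm::finite"
    and Cfull :: "real^'n^'p" and parent :: "'m \<Rightarrow> 'm option"
    and p :: "'b::finite \<Rightarrow> 'b \<Rightarrow> real" and q :: "'m \<Rightarrow> 'b \<Rightarrow> real"
    and P0 :: "real^'n^'n"
  assumes tree: "acyclic (parent_rel parent)"
    and P0_psd: "psd P0"
    and Q_psd: "\<And>k. psd (Q k)"
    and R_pd: "\<And>k. pd (R k)"
    and R_blockdiag: "\<And>k a b. sensor a \<noteq> sensor b \<Longrightarrow> R k $ a $ b = 0"
    and A_bdd: "\<exists>c. \<forall>k. specnorm (A k) \<le> c"
    and Q_bdd: "\<exists>c. \<forall>k. specnorm (Q k) \<le> c"
    and R_bdd: "\<exists>c. \<forall>k. specnorm (R k) \<le> c"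
    and p_nonneg: "\<And>i j. 0 \<le> p i j"
    and p_stoch: "\<And>i. (\<Sum>j\<in>UNIV. p i j) = 1"
    and q_prob: "\<And>m j. 0 \<le> q m j \<and> q m j \<le> 1"
  shows "(\<forall>G k. 0 \<le> trace (Ptraj A Q R sensor Cfull parent P0 G k))
       \<and> (\<exists>W\<ge>0. \<forall>k P i. psd P \<longrightarrow>
            cond_exp_V A Q R sensor Cfull parent p q k P i
              \<le> W + (\<Sum>j\<in>UNIV. p i j * prob_r0 sensor Cfull parent q j)
                    * ((specnorm (A k))\<^sup>2 * trace P + trace (Q k)))"
proof
  show "\<forall>G k. 0 \<le> trace (Ptraj A Q R sensor Cfull parent P0 G k)"
  proof (intro allI)
    fix G k
    have "psd (Ptraj A Q R sensor Cfull parent P0 G k)"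
      by (induction k) (simp_all add: P0_psd ric_psd R_pd Q_psd)
    then show "0 \<le> trace (Ptraj A Q R sensor Cfull parent P0 G k)" by (rule trace_psd_nonneg)
  qed
next
  obtain cA where cA: "\<And>k. specnorm (A k) \<le> cA" using A_bdd by blast
  obtain cQ where cQ: "\<And>k. specnorm (Q k) \<le> cQ" using Q_bdd by blast
  obtain cR where cR: "\<And>k. specnorm (R k) \<le> cR" using R_bdd by blast
  have cA0: "0 \<le> cA" using cA[of 0] specnorm_nonneg[of "A 0"] by linarith
  have cQ0: "0 \<le> cQ" using cQ[of 0] specnorm_nonneg[of "Q 0"] by linarith
  have cR0: "0 \<le> cR" using cR[of 0] specnorm_nonneg[of "R 0"] by linarith
  define Cg where "Cg g = Cmat sensor Cfull parent g" for g
  define full where "full g = full_col_rank (Cg g)" for g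
  define L where "L g = (SOME L :: real^'p^'n. L ** Cg g = mat 1)" for g
  define bnd where "bnd (L' :: real^'p^'n) = real CARD('n) * (cR * ((specnorm (transpose L'))^2 * (real CARD('n) * cA^2))) + real CARD('n) * cQ" for L'
  define Wf where "Wf g = (if full g then bnd (L g) else 0)" for g
  define W where "W = (\<Sum>g\<in>UNIV. Wf g)"
  have bnd0: "0 \<le> bnd L'" for L'
    unfolding bnd_def using cA0 cQ0 cR0 by (intro add_nonneg_nonneg mult_nonneg_nonneg) auto
  have Wf0: "0 \<le> Wf g" for g unfolding Wf_def using bnd0 by simp
  have LC: "L g ** Cg g = mat 1" if "full g" for g
  proof -
    have "inj ((*v) (Cg g))" using that unfolding full_def full_col_rank_def full_rank_injective .
    then have "\<exists>L :: real^'p^'n. L ** Cg g = mat 1" using matrix_left_invertible_injective by blast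
    then show ?thesis unfolding L_def by (rule someI_ex)
  qed
  show "\<exists>W\<ge>0. \<forall>k P i. psd P \<longrightarrow>
            cond_exp_V A Q R sensor Cfull parent p q k P i
              \<le> W + (\<Sum>j\<in>UNIV. p i j * prob_r0 sensor Cfull parent q j)
                    * ((specnorm (A k))\<^sup>2 * trace P + trace (Q k))"
  proof (intro exI[of _ W] conjI allI impI)
    show "0 \<le> W" unfolding W_def using Wf0 by (simp add: sum_nonneg)
    fix k and P :: "real^'n^'n" and i
    assume psdP: "psd P"
    define X where "X = (specnorm (A k))\<^sup>2 * trace P + trace (Q k)"
    define T where "T g = trace (riccati (A k) (Q k) (Cg g) (R k) P)" for g
    have inner: "(\<Sum>g\<in>UNIV. pattern_prob q j g * T g) \<le> W + prob_r0 sensor Cfull parent q j * X" for j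
    proof -
      have "(\<Sum>g\<in>UNIV. pattern_prob q j g * T g) \<le> (\<Sum>g\<in>UNIV. Wf g + (if \<not> full g then pattern_prob q j g * X else 0))"
      proof (rule sum_mono)
        fix g
        have p0: "0 \<le> pattern_prob q j g" and p1: "pattern_prob q j g \<le> 1"
          using pattern_prob_bounds[of q, OF q_prob] by auto
        show "pattern_prob q j g * T g \<le> Wf g + (if \<not> full g then pattern_prob q j g * X else 0)"
        proof (cases "full g")
          case True
          have "T g \<le> Wf g"
            unfolding T_def Wf_def bnd_def using True
            by (simp add: ric_trace_bound2[OF psdP R_pd LC[OF True] cA cR cQ])
          then have "pattern_prob q j g * T g \<le> pattern_prob q j g * Wf g" by (rule mult_left_mono[OF _ p0])
          also have "\<dots> \<le> Wf g" using mult_right_mono[OF p1 Wf0[of g]] by simp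
          finally show ?thesis using True by simp
        next
          case False
          have "T g \<le> X" unfolding T_def X_def by (rule ric_trace_bound1[OF psdP R_pd])
          then have "pattern_prob q j g * T g \<le> pattern_prob q j g * X" by (rule mult_left_mono[OF _ p0])
          then show ?thesis using False Wf0[of g] by simp
        qed
      qed
      also have "\<dots> = W + (\<Sum>g\<in>UNIV. if \<not> full g then pattern_prob q j g * X else 0)"
        unfolding W_def by (simp add: sum.distrib)
      also have "(\<Sum>g\<in>UNIV. if \<not> full g then pattern_prob q j g * X else 0) = prob_r0 sensor Cfull parent q j * X"
        unfolding prob_r0_def sum_distrib_right full_def Cg_def
        by (simp add: sum.inter_filter[symmetric])
      finally show ?thesis .
    qed
    have "cond_exp_V A Q R sensor Cfull parent p q k P i = (\<Sum>j\<in>UNIV. p i j * (\<Sum>g\<in>UNIV. pattern_prob q j g * T g))"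
      unfolding cond_exp_V_def T_def Cg_def ..
    also have "\<dots> \<le> (\<Sum>j\<in>UNIV. p i j * (W + prob_r0 sensor Cfull parent q j * X))"
      by (intro sum_mono mult_left_mono[OF inner p_nonneg])
    also have "\<dots> = W * (\<Sum>j\<in>UNIV. p i j) + (\<Sum>j\<in>UNIV. p i j * prob_r0 sensor Cfull parent q j) * X"
      by (simp add: algebra_simps sum.distrib sum_distrib_left sum_distrib_right)
    also have "\<dots> = W + (\<Sum>j\<in>UNIV. p i j * prob_r0 sensor Cfull parent q j) * X"
      using p_stoch by simp
    finally show "cond_exp_V A Q R sensor Cfull parent p q k P i
              \<le> W + (\<Sum>j\<in>UNIV. p i j * prob_r0 sensor Cfull parent q j)
                    * ((specnorm (A k))\<^sup>2 * trace P + trace (Q k))" unfolding X_def .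
  qed
qed

end
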